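(* Let $\Gamma\le\mathrm{Iso}(\mathbb{R}^{r,s})$ be a subgroup whose centralizer in $\mathrm{Iso}(\mathbb{R}^{r,s})$ has an open orbit in $\mathbb{R}^{r,s}$, let $U_0=U_\Gamma\cap U_\Gamma^\perp$, $k=\dim U_0$, $n=r+s$, and fix a Witt basis with respect to $U_0$. Then for every $\gamma=(I+A,v)\in\Gamma$ the matrix of $A$ in this basis has the block form $$A=\begin{pmatrix}0&-B^\top\tilde I&C\\0&0&B\\0&0&0\end{pmatrix}$$ with $B\in\mathbb{R}^{(n-2k)\times k}$ and $C\in\mathbb{R}^{k\times k}$ skew-symmetric. Moreover $B^\top\tilde I B=0$, i.e. the columns of $B$ are isotropic and mutually orthogonal with respect to $\tilde I$.
   Context: $\mathbb{R}^{r,s}$ denotes $\mathbb{R}^{n}$, $n=r+s$, with a nondegenerate symmetric bilinear form $\langle\cdot,\cdot\rangle$ of signature $(r,s)$; $\mathrm{Iso}(\mathbb{R}^{r,s})$ is its group of affine isometries, whose elements are written $\gamma=(I+A,v)\colon x\mapsto(I+A)x+v$. $U_\Gamma=\sum_{(I+A,v)\in\Gamma}\operatorname{im}A$, and $U_0=U_\Gamma\cap U_\Gamma^\perp$ is totally isotropic. A Witt basis with respect to $U_0$ ($k=\dim U_0$) is a basis $u_1,\dots,u_k,w_1,\dots,w_{n-2k},u_1^*,\dots,u_k^*$ of $\mathbb{R}^{r,s}$ such that $u_1,\dots,u_k$ is a basis of $U_0$, $w_1,\dots,w_{n-2k}$ is a basis of a nondegenerate subspace $W$ with $U_0^\perp=U_0\oplus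 W$, and $u_1^*,\dots,u_k^*$ span a totally isotropic subspace $U_0^*$ orthogonal to $W$ with $\langle u_i,u_j^*\rangle=\delta_{ij}$. $\tilde I$ is the (diagonal signature) matrix of the restriction of $\langle\cdot,\cdot\rangle$ to $W$ in the basis $w_1,\dots,w_{n-2k}$. Known facts (Wolf) for such $\Gamma$: every $(I+A,v)\in\Gamma$ satisfies $A^2=0$, $Av=0$, $\langle Ax,y\rangle=-\langle x,Ay\rangle$, $\ker A=(\operatorname{im}A)^\perp$; for $\gamma_i=(I+A_i,v_i)\in\Gamma$ one has $A_1A_2A_3=0$ and $[\gamma_1,\gamma_2]=(I+2A_1A_2,2A_1v_2)$. *)

theory Defs
  imports "HOL-Analysis.Analysis"
begin

text \<open>R^{r,s}: the space real^'n with the diagonal form of signature given by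
  eps (eps i \<in> {1,-1}; r = number of +1's, s = number of -1's).\<close>

definition sig :: "('n::finite \<Rightarrow> real) \<Rightarrow> bool" where
  "sig eps \<longleftrightarrow> (\<forall>i. eps i = 1 \<or> eps i = -1)"

definition bf :: "('n::finite \<Rightarrow> real) \<Rightarrow> real^'n \<Rightarrow> real^'n \<Rightarrow> real" where
  "bf eps x y = (\<Sum>i\<in>UNIV. eps i * (x$i) * (y$i))"

definition Iso :: "('n::finite \<Rightarrow> real) \<Rightarrow> (real^'n \<Rightarrow> real^'n) set" where
  "Iso eps = {f. \<exists>L v. linear L \<and> (\<forall>x y. bf eps (L x) (L y) = bf eps x y)
                    \<and> f = (\<lambda>x. L x + v)}"

definition is_subgroup :: "('n::finite \<Rightarrow> real) \<Rightarrow> (real^'n \<Rightarrow> real^'n) set \<Rightarrow> bool" where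
  "is_subgroup eps G \<longleftrightarrow> G \<subseteq> Iso eps \<and> id \<in> G \<and> (\<forall>f\<in>G. \<forall>g\<in>G. f \<circ> g \<in> G)
      \<and> (\<forall>f\<in>G. inv f \<in> G)"

definition centralizer :: "('n::finite \<Rightarrow> real) \<Rightarrow> (real^'n \<Rightarrow> real^'n) set \<Rightarrow> (real^'n \<Rightarrow> real^'n) set" where
  "centralizer eps G = {g\<in>Iso eps. \<forall>f\<in>G. g \<circ> f = f \<circ> g}"

definition has_open_orbit :: "(real^'n::finite \<Rightarrow> real^'n) set \<Rightarrow> bool" where
  "has_open_orbit H \<longleftrightarrow> (\<exists>x. open ((\<lambda>g. g x) ` H))"

text \<open>For \<gamma> = (I+A, v): A x = \<gamma> x - \<gamma> 0 - x.\<close>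
definition Apart :: "(real^'n::finite \<Rightarrow> real^'n) \<Rightarrow> real^'n \<Rightarrow> real^'n" where
  "Apart f x = f x - f 0 - x"

definition U_Gamma :: "(real^'n::finite \<Rightarrow> real^'n) set \<Rightarrow> (real^'n) set" where
  "U_Gamma G = span (\<Union>f\<in>G. range (Apart f))"

definition orth :: "('n::finite \<Rightarrow> real) \<Rightarrow> (real^'n) set \<Rightarrow> (real^'n) set" where
  "orth eps S = {x. \<forall>y\<in>S. bf eps x y = 0}"

definition U0 :: "('n::finite \<Rightarrow> real) \<Rightarrow> (real^'n \<Rightarrow> real^'n) set \<Rightarrow> (real^'n) set" where
  "U0 eps G = U_Gamma G \<inter> orth eps (U_Gamma G)"

text \<open>Witt basis u_0..u_{k-1}, w_0..w_{m-1}, us_0..us_{k-1} w.r.t. U (k = dim U, m = n - 2k),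
  with w orthonormal (so that the Gram matrix of w is a diagonal signature matrix).\<close>
definition witt_basis :: "('n::finite \<Rightarrow> real) \<Rightarrow> (real^'n) set \<Rightarrow> (nat \<Rightarrow> real^'n)
    \<Rightarrow> (nat \<Rightarrow> real^'n) \<Rightarrow> (nat \<Rightarrow> real^'n) \<Rightarrow> bool" where
  "witt_basis eps U u w us \<longleftrightarrow>
    (let k = dim U; m = CARD('n) - 2 * k;
         L = map u [0..<k] @ map w [0..<m] @ map us [0..<k];
         W = span (w ` {..<m})
     in distinct L \<and> independent (set L) \<and> span (set L) = UNIV
      \<and> span (u ` {..<k}) = U
      \<and> orth eps U = {a + b | a b. a \<in> U \<and> b \<in> W} \<and> U \<inter> W = {0}
      \<and> (\<forall>x\<in>W. (\<forall>y\<in>W. bf eps x y = 0) \<longrightarrow> x = 0)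
      \<and> (\<forall>i<m. \<forall>j<m. i \<noteq> j \<longrightarrow> bf eps (w i) (w j) = 0)
      \<and> (\<forall>i<m. bf eps (w i) (w i) = 1 \<or> bf eps (w i) (w i) = -1)
      \<and> (\<forall>i<k. \<forall>j<k. bf eps (us i) (us j) = 0)
      \<and> (\<forall>i<k. \<forall>j<m. bf eps (us i) (w j) = 0)
      \<and> (\<forall>i<k. \<forall>j<k. bf eps (u i) (us j) = (if i = j then 1 else 0)))"

end

theory Submission
  imports Defs
begin

lemma bf_add1: "bf e (x + y) z = bf e x z + bf e y z"
  by (simp add: bf_def algebra_simps sum.distrib)
lemma bf_scale1: "bf e (c *\<^sub>R x) z = c * bf e x z"
  by (simp add: bf_def sum_distrib_left algebra_simps)
lemma bf_sym: "bf e x y = bf e y x"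
  by (simp add: bf_def ac_simps)
lemma bf_lin1: "linear (\<lambda>x. bf e x z)"
  by (rule linearI) (simp_all add: bf_add1 bf_scale1)
lemma bf_lin2: "linear (\<lambda>x. bf e z x)"
  by (rule linearI) (simp_all add: bf_sym[of e z] bf_add1 bf_scale1)
lemma bf_sum1: "bf e (sum f S) z = (\<Sum>i\<in>S. bf e (f i) z)"
  using linear_sum[OF bf_lin1[of e z]] by simp
lemma bf_sum2: "bf e z (sum f S) = (\<Sum>i\<in>S. bf e z (f i))"
  using linear_sum[OF bf_lin2[of e z]] by simp
lemma bf_add2: "bf e z (x + y) = bf e z x + bf e z y"
  by (simp add: bf_sym[of e z] bf_add1)
lemma bf_scale2: "bf e z (c *\<^sub>R x) = c * bf e z x"
  by (simp add: bf_sym[of e z] bf_scale1)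
lemma bf_diff1: "bf e (x - y) z = bf e x z - bf e y z"
  using linear_diff[OF bf_lin1] by blast
lemma bf_diff2: "bf e z (x - y) = bf e z x - bf e z y"
  using linear_diff[OF bf_lin2] by blast
lemma bf_zero1[simp]: "bf e 0 z = 0" by (simp add: bf_def)
lemma bf_zero2[simp]: "bf e z 0 = 0" by (simp add: bf_def)
lemma bf_neg1: "bf e (- x) z = - bf e x z"
  using linear_neg[OF bf_lin1] by blast
lemma bf_neg2: "bf e z (- x) = - bf e z x"
  using linear_neg[OF bf_lin2] by blast

lemma bf_nondeg:
  assumes "sig e" "\<And>y. bf e x y = 0" shows "x = 0"
proof -
  have "x $ i = 0" for i
  proof -
    have "bf e x (axis i 1) = e i * x $ i"
      unfolding bf_def axis_def by (simp add: if_distrib cong: if_cong)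
    moreover have "e i \<noteq> 0" using assms(1) unfolding sig_def by (metis zero_neq_neg_one zero_neq_one)
    ultimately show ?thesis using assms(2)[of "axis i 1"] by simp
  qed
  then show ?thesis by (simp add: vec_eq_iff)
qed

lemma bf_span2:
  assumes "\<forall>b\<in>S. bf e x b = 0" "y \<in> span S" shows "bf e x y = 0"
  using linear_eq_0_on_span[OF bf_lin2[of e x]] assms by blast

lemma Iso_Apart:
  assumes "f \<in> Iso e"
  shows "linear (Apart f)" "\<And>x. f x = Apart f x + x + f 0"
    "\<And>x y. bf e (x + Apart f x) (y + Apart f y) = bf e x y"
proof -
  obtain L v where L: "linear L" "\<And>x y. bf e (L x) (L y) = bf e x y" "f = (\<lambda>x. L x + v)"
    using assms unfolding Iso_def by blast
  have A: "Apart f x = L x - x" for x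
    unfolding Apart_def L(3) using linear_0[OF L(1)] by simp
  show "linear (Apart f)"
    unfolding A[abs_def] by (intro linear_compose_sub L(1) linear_ident)
  show "f x = Apart f x + x + f 0" for x
    using A linear_0[OF L(1)] L(3) by simp
  show "bf e (x + Apart f x) (y + Apart f y) = bf e x y" for x y
    using L(2) A by simp
qed

lemma Iso_diff:
  assumes "f \<in> Iso e"
  shows "f a - f b = (a - b) + Apart f (a - b)"
proof -
  have "f a - f b = (Apart f a + a + f 0) - (Apart f b + b + f 0)"
    using Iso_Apart(2)[OF assms] by metis
  also have "\<dots> = (a - b) + Apart f (a - b)"
    using linear_diff[OF Iso_Apart(1)[OF assms]] by (simp add: algebra_simps)
  finally show ?thesis .
qed

lemma grp_aux:
  fixes P Q S1 S2 R1 R2 :: "'a::ab_group_add"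
  assumes "P + S1 + S2 = - (Q + R1 + R2)" "S1 = - R1" "S2 = - R2" shows "P = - Q"
  using assms by (simp add: algebra_simps)

lemma Q_expand: "bf e (a + t *\<^sub>R b) (a + t *\<^sub>R b) = bf e a a + 2 * t * bf e a b + t^2 * bf e b b"
  by (simp add: bf_add1 bf_add2 bf_scale1 bf_scale2 bf_sym[of e b a] power2_eq_square algebra_simps)

lemma id_Iso: "id \<in> Iso e"
  unfolding Iso_def by (rule CollectI, rule exI[of _ id], rule exI[of _ 0]) (auto simp: linear_id)

context
  fixes eps :: "'n::finite \<Rightarrow> real" and G :: "(real^'n \<Rightarrow> real^'n) set"
  assumes sg: "sig eps" and sub: "is_subgroup eps G" and oo: "has_open_orbit (centralizer eps G)"
begin

lemma G_Iso: "g \<in> G \<Longrightarrow> g \<in> Iso eps"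
  using sub unfolding is_subgroup_def by blast

lemma G_comp: "g \<in> G \<Longrightarrow> h \<in> G \<Longrightarrow> g \<circ> h \<in> G"
  using sub unfolding is_subgroup_def by blast

lemma isotropic:
  assumes g: "\<gamma> \<in> G"
  shows "bf eps (Apart \<gamma> y) (Apart \<gamma> y) = 0"
proof -
  let ?Z = "centralizer eps G"
  obtain x0 where op: "open ((\<lambda>g. g x0) ` ?Z)" using oo unfolding has_open_orbit_def by blast
  have "id \<in> ?Z" unfolding centralizer_def using id_Iso by auto
  then have "x0 \<in> (\<lambda>g. g x0) ` ?Z" using image_eqI[of x0 "\<lambda>g. g x0" id] by simp
  then obtain r where r: "r > 0" "ball x0 r \<subseteq> (\<lambda>g. g x0) ` ?Z"
    using op openE by blast
  define d where "d z = \<gamma> z - z" for z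
  have gi: "\<gamma> \<in> Iso eps" using G_Iso g .
  have const: "bf eps (d z) (d z) = bf eps (d x0) (d x0)" if zin: "z \<in> (\<lambda>g. g x0) ` ?Z" for z
  proof -
    obtain h where h: "h \<in> ?Z" "z = h x0" using zin by blast
    have hi: "h \<in> Iso eps" and hc: "h \<circ> \<gamma> = \<gamma> \<circ> h"
      using h g unfolding centralizer_def by auto
    have "d z = h (\<gamma> x0) - h x0" unfolding d_def h(2) using hc
      by (metis comp_apply)
    also have "\<dots> = d x0 + Apart h (d x0)" unfolding d_def by (rule Iso_diff[OF hi])
    finally show ?thesis using Iso_Apart(3)[OF hi, of "d x0" "d x0"] by simp
  qed
  have dlin: "d (x0 + t *\<^sub>R y) = d x0 + t *\<^sub>R Apart \<gamma> y" for t
  proof -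
    have "d (x0 + t *\<^sub>R y) = Apart \<gamma> (x0 + t *\<^sub>R y) + \<gamma> 0"
      unfolding d_def using Iso_Apart(2)[OF gi, of "x0 + t *\<^sub>R y"] by simp
    also have "\<dots> = Apart \<gamma> x0 + \<gamma> 0 + t *\<^sub>R Apart \<gamma> y"
      using linear_add[OF Iso_Apart(1)[OF gi]] linear_scale[OF Iso_Apart(1)[OF gi]] by simp
    also have "Apart \<gamma> x0 + \<gamma> 0 = d x0"
      unfolding d_def using Iso_Apart(2)[OF gi, of x0] by simp
    finally show ?thesis .
  qed
  define a where "a = d x0"
  define b where "b = Apart \<gamma> y"
  have eq: "2 * t * bf eps a b + t^2 * bf eps b b = 0" if "\<bar>t\<bar> * norm y < r" for t
  proof -
    have "x0 + t *\<^sub>R y \<in> ball x0 r" using that by (simp add: dist_norm)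
    then have "bf eps (d (x0 + t *\<^sub>R y)) (d (x0 + t *\<^sub>R y)) = bf eps a a"
      using const r(2) a_def by blast
    then show ?thesis unfolding dlin Q_expand a_def b_def by simp
  qed
  define \<delta> where "\<delta> = r / (2 * (norm y + 1))"
  have dpos: "\<delta> > 0" unfolding \<delta>_def using r(1) by (simp add: add_pos_nonneg add_nonneg_pos)
  have "2 * \<delta> * norm y < r"
  proof -
    have np: "norm y + 1 > 0" by (simp add: add_nonneg_pos)
    have "2 * \<delta> * norm y = r * (norm y / (norm y + 1))" unfolding \<delta>_def
      using np by (simp add: field_simps)
    also have "\<dots> < r * 1" using r(1) np by (intro mult_strict_left_mono) (auto simp: divide_less_eq)
    finally show ?thesis by simp
  qed
  then have "\<bar>\<delta>\<bar> * norm y < r" "\<bar>2*\<delta>\<bar> * norm y < r" using dpos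
    by (auto simp: mult.assoc) (smt (verit) mult_nonneg_nonneg norm_ge_zero)
  from eq[OF this(1)] eq[OF this(2)]
  have "2 * \<delta> * bf eps a b + \<delta>^2 * bf eps b b = 0"
       "4 * \<delta> * bf eps a b + 4 * \<delta>^2 * bf eps b b = 0" by (simp_all add: power2_eq_square algebra_simps)
  then have "\<delta>^2 * bf eps b b = 0" by linarith
  then show ?thesis using dpos b_def by simp
qed

lemma cross0:
  assumes g: "\<gamma> \<in> G" shows "bf eps (Apart \<gamma> x) (Apart \<gamma> y) = 0"
proof -
  have l: "linear (Apart \<gamma>)" using Iso_Apart(1)[OF G_Iso[OF g]] .
  have "bf eps (Apart \<gamma> (x + y)) (Apart \<gamma> (x + y)) = 0" using isotropic[OF g] .
  then have "bf eps (Apart \<gamma> x + Apart \<gamma> y) (Apart \<gamma> x + Apart \<gamma> y) = 0"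
    using linear_add[OF l] by simp
  then show ?thesis using isotropic[OF g, of x] isotropic[OF g, of y]
    by (simp add: bf_add1 bf_add2 bf_sym[of eps "Apart \<gamma> y" "Apart \<gamma> x"])
qed

lemma skew:
  assumes g: "\<gamma> \<in> G" shows "bf eps (Apart \<gamma> x) y = - bf eps x (Apart \<gamma> y)"
  using Iso_Apart(3)[OF G_Iso[OF g], of x y] cross0[OF g, of x y]
  by (simp add: bf_add1 bf_add2)

lemma Apart_comp:
  assumes g: "\<gamma> \<in> Iso eps" and h: "\<gamma>' \<in> Iso eps"
  shows "Apart (\<gamma> \<circ> \<gamma>') y = Apart \<gamma> (Apart \<gamma>' y) + Apart \<gamma> y + Apart \<gamma>' y"
proof -
  have e: "\<gamma>' y - \<gamma>' 0 = Apart \<gamma>' y + y" using Iso_Apart(2)[OF h, of y] by (simp add: algebra_simps)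
  have "Apart (\<gamma> \<circ> \<gamma>') y = (\<gamma> (\<gamma>' y) - \<gamma> (\<gamma>' 0)) - y" unfolding Apart_def by simp
  also have "\<dots> = (Apart \<gamma>' y + y) + Apart \<gamma> (Apart \<gamma>' y + y) - y"
    unfolding Iso_diff[OF g] e ..
  finally show ?thesis using linear_add[OF Iso_Apart(1)[OF g]] by simp
qed

lemma anticomm:
  assumes g: "\<gamma> \<in> G" and h: "\<gamma>' \<in> G"
  shows "Apart \<gamma>' (Apart \<gamma> y) = - Apart \<gamma> (Apart \<gamma>' y)"
proof -
  have gh: "\<gamma> \<circ> \<gamma>' \<in> G" using G_comp g h .
  have c: "Apart (\<gamma> \<circ> \<gamma>') x = Apart \<gamma> (Apart \<gamma>' x) + Apart \<gamma> x + Apart \<gamma>' x" for x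
    using Apart_comp[OF G_Iso[OF g] G_Iso[OF h]] .
  have "bf eps (Apart \<gamma>' (Apart \<gamma> y) + Apart \<gamma> (Apart \<gamma>' y)) z = 0" for z
  proof -
    have 1: "bf eps (Apart (\<gamma> \<circ> \<gamma>') y) z = - bf eps y (Apart (\<gamma> \<circ> \<gamma>') z)"
      using skew[OF gh] .
    have 2: "bf eps (Apart \<gamma> y) z = - bf eps y (Apart \<gamma> z)" using skew[OF g] .
    have 3: "bf eps (Apart \<gamma>' y) z = - bf eps y (Apart \<gamma>' z)" using skew[OF h] .
    have 4: "bf eps y (Apart \<gamma> (Apart \<gamma>' z)) = - bf eps (Apart \<gamma> y) (Apart \<gamma>' z)"
      using skew[OF g, of y "Apart \<gamma>' z"] by simp
    have 5: "bf eps (Apart \<gamma>' (Apart \<gamma> y)) z = - bf eps (Apart \<gamma> y) (Apart \<gamma>' z)"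
      using skew[OF h] .
    from 1 2 3 have "bf eps (Apart \<gamma> (Apart \<gamma>' y)) z = - bf eps y (Apart \<gamma> (Apart \<gamma>' z))"
      unfolding c by (simp add: bf_add1 bf_add2)
    then show ?thesis using 4 5 by (simp add: bf_add1)
  qed
  then have "Apart \<gamma>' (Apart \<gamma> y) + Apart \<gamma> (Apart \<gamma>' y) = 0" using bf_nondeg[OF sg] by blast
  then show ?thesis by (simp add: eq_neg_iff_add_eq_0)
qed

lemma triple:
  assumes g1: "g1 \<in> G" and g2: "g2 \<in> G" and g3: "g3 \<in> G"
  shows "Apart g1 (Apart g2 (Apart g3 y)) = 0"
proof -
  have l1: "linear (Apart g1)" using Iso_Apart(1)[OF G_Iso[OF g1]] .
  have l2: "linear (Apart g2)" using Iso_Apart(1)[OF G_Iso[OF g2]] .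
  have g23: "g2 \<circ> g3 \<in> G" using G_comp g2 g3 .
  have c: "Apart (g2 \<circ> g3) x = Apart g2 (Apart g3 x) + Apart g2 x + Apart g3 x" for x
    using Apart_comp[OF G_Iso[OF g2] G_Iso[OF g3]] .
  have a: "Apart (g2 \<circ> g3) (Apart g1 y) = - Apart g1 (Apart (g2 \<circ> g3) y)"
    using anticomm[OF g1 g23] .
  have b1: "Apart g2 (Apart g1 y) = - Apart g1 (Apart g2 y)" using anticomm[OF g1 g2] .
  have b2: "Apart g3 (Apart g1 y) = - Apart g1 (Apart g3 y)" using anticomm[OF g1 g3] .
  have eq: "Apart g2 (Apart g3 (Apart g1 y)) + Apart g2 (Apart g1 y) + Apart g3 (Apart g1 y)
     = - (Apart g1 (Apart g2 (Apart g3 y)) + Apart g1 (Apart g2 y) + Apart g1 (Apart g3 y))"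
    using a unfolding c linear_add[OF l1] .
  have X1: "Apart g2 (Apart g3 (Apart g1 y)) = - Apart g1 (Apart g2 (Apart g3 y))"
    using grp_aux[OF eq b1 b2] .
  have "Apart g1 (Apart g2 (Apart g3 y)) = - Apart g2 (Apart g1 (Apart g3 y))"
    using anticomm[OF g2 g1] by simp
  also have "\<dots> = Apart g2 (Apart g3 (Apart g1 y))"
    using b2 linear_neg[OF l2] by simp
  finally have "Apart g1 (Apart g2 (Apart g3 y)) = - Apart g1 (Apart g2 (Apart g3 y))"
    using X1 by simp
  then show ?thesis by (simp add: vec_eq_iff)
qed

lemma in_UG: "\<gamma> \<in> G \<Longrightarrow> Apart \<gamma> y \<in> U_Gamma G"
  unfolding U_Gamma_def by (rule span_base) blast

lemma orth_UG:
  assumes "\<And>\<gamma> y. \<gamma> \<in> G \<Longrightarrow> bf eps x (Apart \<gamma> y) = 0"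
  shows "x \<in> orth eps (U_Gamma G)"
  unfolding orth_def U_Gamma_def using bf_span2[of "\<Union>f\<in>G. range (Apart f)" eps x] assms by blast

lemma AA_U0:
  assumes g: "\<gamma> \<in> G" and h: "\<gamma>' \<in> G"
  shows "Apart \<gamma> (Apart \<gamma>' y) \<in> U0 eps G"
proof -
  have "bf eps (Apart \<gamma> (Apart \<gamma>' y)) (Apart g z) = 0" if gz: "g \<in> G" for g z
  proof -
    have "bf eps (Apart \<gamma> (Apart \<gamma>' y)) (Apart g z) = - bf eps (Apart \<gamma>' y) (Apart \<gamma> (Apart g z))"
      using skew[OF g] .
    also have "\<dots> = bf eps y (Apart \<gamma>' (Apart \<gamma> (Apart g z)))"
      using skew[OF h] by simp
    finally show ?thesis using triple[OF h g gz] by simp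
  qed
  then have "Apart \<gamma> (Apart \<gamma>' y) \<in> orth eps (U_Gamma G)" by (rule orth_UG)
  then show ?thesis unfolding U0_def using in_UG[OF g] by (rule IntI[rotated])
qed

lemma U0_zero:
  assumes x: "x \<in> U0 eps G" and g: "\<gamma> \<in> G"
  shows "Apart \<gamma> x = 0"
proof -
  have "bf eps (Apart \<gamma> x) z = 0" for z
  proof -
    have "x \<in> orth eps (U_Gamma G)" using x unfolding U0_def by blast
    then have "bf eps x (Apart \<gamma> z) = 0"
      using in_UG[OF g] unfolding orth_def by blast
    then show ?thesis using skew[OF g] by simp
  qed
  then show ?thesis using bf_nondeg[OF sg] by blast
qed

end

lemma sum_delta_lt:
  fixes f :: "nat \<Rightarrow> real"
  assumes "p < k" "\<And>i. i < k \<Longrightarrow> f i = (if i = p then c else 0)"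
  shows "(\<Sum>i<k. f i) = c"
proof -
  have "(\<Sum>i<k. f i) = (\<Sum>i<k. (if i = p then c else 0))" using assms(2) by (intro sum.cong) auto
  also have "\<dots> = c" using assms(1) by (simp add: sum.delta)
  finally show ?thesis .
qed

lemma sum_zero_lt:
  fixes f :: "nat \<Rightarrow> 'a::comm_monoid_add"
  assumes "\<And>i. i < k \<Longrightarrow> f i = 0" shows "(\<Sum>i<k. f i) = 0"
  using assms by (intro sum.neutral) auto

theorem theorem4p4:
  fixes eps :: "'n::finite \<Rightarrow> real"
    and \<Gamma> :: "(real^'n \<Rightarrow> real^'n) set"
    and u w us :: "nat \<Rightarrow> real^'n"
  assumes "sig eps"
    and "is_subgroup eps \<Gamma>"
    and "has_open_orbit (centralizer eps \<Gamma>)"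
    and "witt_basis eps (U0 eps \<Gamma>) u w us"
  shows "\<forall>\<gamma>\<in>\<Gamma>. \<exists>(B :: nat \<Rightarrow> nat \<Rightarrow> real) (C :: nat \<Rightarrow> nat \<Rightarrow> real).
     let k = dim (U0 eps \<Gamma>); m = CARD('n) - 2 * k; It = (\<lambda>l l'. bf eps (w l) (w l')) in
       (\<forall>i<k. Apart \<gamma> (u i) = 0)
     \<and> (\<forall>j<m. Apart \<gamma> (w j) = (\<Sum>i<k. (- (\<Sum>l<m. B l i * It l j)) *\<^sub>R u i))
     \<and> (\<forall>j<k. Apart \<gamma> (us j) = (\<Sum>i<k. C i j *\<^sub>R u i) + (\<Sum>l<m. B l j *\<^sub>R w l))
     \<and> (\<forall>i<k. \<forall>j<k. C i j = - C j i)
     \<and> (\<forall>i<k. \<forall>j<k. (\<Sum>l<m. \<Sum>l'<m. B l i * It l l' * B l' j) = 0)"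
proof -
  define U where "U = U0 eps \<Gamma>"
  define k where "k = dim U"
  define m where "m = CARD('n) - 2 * k"
  define W where "W = span (w ` {..<m})"
  note X = assms(4)[unfolded witt_basis_def Let_def U_def[symmetric] k_def[symmetric]
      m_def[symmetric] W_def[symmetric]]
  have spanL: "span (u ` {..<k} \<union> w ` {..<m} \<union> us ` {..<k}) = UNIV"
    using X[THEN conjunct2, THEN conjunct2, THEN conjunct1] by (simp add: atLeast0LessThan Un_assoc)
  note spanU = X[THEN conjunct2, THEN conjunct2, THEN conjunct2, THEN conjunct1]
  note orthU = X[THEN conjunct2, THEN conjunct2, THEN conjunct2, THEN conjunct2, THEN conjunct1]
  have ww: "\<And>i j. i < m \<Longrightarrow> j < m \<Longrightarrow> i \<noteq> j \<Longrightarrow> bf eps (w i) (w j) = 0" using X[THEN conjunct2, THEN conjunct2, THEN conjunct2, THEN conjunct2, THEN conjunct2, THEN conjunct2, THEN conjunct2, THEN conjunct1] by blast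
  have ww1: "\<And>i. i < m \<Longrightarrow> bf eps (w i) (w i) = 1 \<or> bf eps (w i) (w i) = -1" using X[THEN conjunct2, THEN conjunct2, THEN conjunct2, THEN conjunct2, THEN conjunct2, THEN conjunct2, THEN conjunct2, THEN conjunct2, THEN conjunct1] by blast
  have usus: "\<And>i j. i < k \<Longrightarrow> j < k \<Longrightarrow> bf eps (us i) (us j) = 0" using X[THEN conjunct2, THEN conjunct2, THEN conjunct2, THEN conjunct2, THEN conjunct2, THEN conjunct2, THEN conjunct2, THEN conjunct2, THEN conjunct2, THEN conjunct1] by blast
  have usw: "\<And>i j. i < k \<Longrightarrow> j < m \<Longrightarrow> bf eps (us i) (w j) = 0" using X[THEN conjunct2, THEN conjunct2, THEN conjunct2, THEN conjunct2, THEN conjunct2, THEN conjunct2, THEN conjunct2, THEN conjunct2, THEN conjunct2, THEN conjunct2, THEN conjunct1] by blast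
  have uus: "\<And>i j. i < k \<Longrightarrow> j < k \<Longrightarrow> bf eps (u i) (us j) = (if i = j then 1 else 0)"
    using X[THEN conjunct2, THEN conjunct2, THEN conjunct2, THEN conjunct2, THEN conjunct2, THEN conjunct2, THEN conjunct2, THEN conjunct2, THEN conjunct2, THEN conjunct2, THEN conjunct2] by blast
  have uU: "u i \<in> U" if "i < k" for i using spanU that by (metis lessThan_iff image_eqI span_base)
  have Uiso: "bf eps x y = 0" if "x \<in> U" "y \<in> U" for x y
    using that unfolding U_def U0_def orth_def by blast
  have wU: "bf eps (w l) x = 0" if "l < m" "x \<in> U" for l x
  proof -
    have "0 \<in> U" using spanU span_zero by blast
    moreover have "w l \<in> W" unfolding W_def using that(1) by (intro span_base) auto
    ultimately have "w l \<in> orth eps U" unfolding orthU by force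
    then show ?thesis using that(2) unfolding orth_def by blast
  qed
  define \<epsilon> where "\<epsilon> l = bf eps (w l) (w l)" for l
  have eps2: "\<epsilon> l * \<epsilon> l = 1" if "l < m" for l using ww1[OF that] unfolding \<epsilon>_def by auto
  have wwd: "bf eps (w l) (w j) = (if l = j then \<epsilon> j else 0)" if "l < m" "j < m" for l j
    using ww[OF that] unfolding \<epsilon>_def by (cases "l = j") auto
  have nondegL: "y = 0" if "\<And>i. i < k \<Longrightarrow> bf eps y (u i) = 0" "\<And>l. l < m \<Longrightarrow> bf eps y (w l) = 0"
     "\<And>i. i < k \<Longrightarrow> bf eps y (us i) = 0" for y
  proof -
    have "\<forall>b\<in>u ` {..<k} \<union> w ` {..<m} \<union> us ` {..<k}. bf eps y b = 0" using that by auto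
    then have "bf eps y z = 0" for z by (rule bf_span2) (simp add: spanL)
    then show ?thesis by (rule bf_nondeg[OF assms(1)])
  qed
  define E where "E x = (\<Sum>i<k. bf eps x (us i) *\<^sub>R u i) + (\<Sum>l<m. (\<epsilon> l * bf eps x (w l)) *\<^sub>R w l)
      + (\<Sum>i<k. bf eps x (u i) *\<^sub>R us i)" for x
  have expand: "x = E x" for x
  proof -
    have Eu: "bf eps (E x) (u p) = bf eps x (u p)" if p: "p < k" for p
    proof -
      have "bf eps (E x) (u p) = (\<Sum>i<k. bf eps x (us i) * bf eps (u i) (u p))
         + (\<Sum>l<m. (\<epsilon> l * bf eps x (w l)) * bf eps (w l) (u p)) + (\<Sum>i<k. bf eps x (u i) * bf eps (us i) (u p))"
        unfolding E_def by (simp add: bf_add1 bf_sum1 bf_scale1)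
      also have "(\<Sum>i<k. bf eps x (us i) * bf eps (u i) (u p)) = 0"
        by (rule sum_zero_lt) (simp add: Uiso uU p)
      also have "(\<Sum>l<m. (\<epsilon> l * bf eps x (w l)) * bf eps (w l) (u p)) = 0"
        by (rule sum_zero_lt) (simp add: wU uU p)
      also have "(\<Sum>i<k. bf eps x (u i) * bf eps (us i) (u p)) = bf eps x (u p)"
        by (rule sum_delta_lt[OF p]) (simp add: bf_sym[of eps "us _"] uus p)
      finally show ?thesis by simp
    qed
    have Ew: "bf eps (E x) (w p) = bf eps x (w p)" if p: "p < m" for p
    proof -
      have "bf eps (E x) (w p) = (\<Sum>i<k. bf eps x (us i) * bf eps (u i) (w p))
         + (\<Sum>l<m. (\<epsilon> l * bf eps x (w l)) * bf eps (w l) (w p)) + (\<Sum>i<k. bf eps x (u i) * bf eps (us i) (w p))"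
        unfolding E_def by (simp add: bf_add1 bf_sum1 bf_scale1)
      also have "(\<Sum>i<k. bf eps x (us i) * bf eps (u i) (w p)) = 0"
        by (rule sum_zero_lt) (simp add: bf_sym[of eps "u _"] wU uU p)
      also have "(\<Sum>l<m. (\<epsilon> l * bf eps x (w l)) * bf eps (w l) (w p)) = bf eps x (w p)"
        by (rule sum_delta_lt[OF p]) (auto simp: wwd p eps2 mult.commute mult.left_commute)
      also have "(\<Sum>i<k. bf eps x (u i) * bf eps (us i) (w p)) = 0"
        by (rule sum_zero_lt) (simp add: usw p)
      finally show ?thesis by simp
    qed
    have Eus: "bf eps (E x) (us p) = bf eps x (us p)" if p: "p < k" for p
    proof -
      have "bf eps (E x) (us p) = (\<Sum>i<k. bf eps x (us i) * bf eps (u i) (us p))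
         + (\<Sum>l<m. (\<epsilon> l * bf eps x (w l)) * bf eps (w l) (us p)) + (\<Sum>i<k. bf eps x (u i) * bf eps (us i) (us p))"
        unfolding E_def by (simp add: bf_add1 bf_sum1 bf_scale1)
      also have "(\<Sum>i<k. bf eps x (us i) * bf eps (u i) (us p)) = bf eps x (us p)"
        by (rule sum_delta_lt[OF p]) (simp add: uus p)
      also have "(\<Sum>l<m. (\<epsilon> l * bf eps x (w l)) * bf eps (w l) (us p)) = 0"
        by (rule sum_zero_lt) (simp add: bf_sym[of eps "w _"] usw p)
      also have "(\<Sum>i<k. bf eps x (u i) * bf eps (us i) (us p)) = 0"
        by (rule sum_zero_lt) (simp add: usus p)
      finally show ?thesis by simp
    qed
    have "x - E x = 0"
      by (rule nondegL) (simp_all add: bf_diff1 Eu Ew Eus)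
    then show ?thesis by simp
  qed
  show ?thesis
  proof
    fix \<gamma> assume g: "\<gamma> \<in> \<Gamma>"
    define A where "A = Apart \<gamma>"
    have l: "linear A" unfolding A_def using Iso_Apart(1)[OF G_Iso[OF assms(1-3) g]] .
    have sk: "bf eps (A x) y = - bf eps x (A y)" for x y
      unfolding A_def using skew[OF assms(1-3) g] .
    have Au: "A (u i) = 0" if "i < k" for i
      unfolding A_def using U0_zero[OF assms(1-3) _ g] uU[OF that] U_def by blast
    define B where "B l j = \<epsilon> l * bf eps (A (us j)) (w l)" for l j
    define C where "C i j = bf eps (A (us j)) (us i)" for i j
    have AU: "bf eps (A x) (u i) = 0" if "i < k" for x i
      using sk Au[OF that] by simp
    have Aus: "A (us j) = (\<Sum>i<k. C i j *\<^sub>R u i) + (\<Sum>l<m. B l j *\<^sub>R w l)" for j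
    proof -
      have "(\<Sum>i<k. bf eps (A (us j)) (u i) *\<^sub>R us i) = 0"
        by (rule sum_zero_lt) (simp add: AU)
      then show ?thesis using expand[of "A (us j)"] unfolding E_def B_def C_def by simp
    qed
    have AwU: "A (w j) \<in> U" if j: "j < m" for j
    proof -
      have "bf eps (A (w j)) (Apart g z) = 0" if gz: "g \<in> \<Gamma>" for g z
      proof -
        have "Apart \<gamma> (Apart g z) \<in> U" using AA_U0[OF assms(1-3) g gz] U_def by simp
        then have "bf eps (w j) (A (Apart g z)) = 0" using wU[OF j] A_def by simp
        then show ?thesis using sk by simp
      qed
      then have "A (w j) \<in> orth eps (U_Gamma \<Gamma>)" by (rule orth_UG[OF assms(1-3)])
      moreover have "A (w j) \<in> U_Gamma \<Gamma>" unfolding A_def by (rule in_UG[OF assms(1-3) g])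
      ultimately show ?thesis unfolding U_def U0_def by blast
    qed
    have Aw: "A (w j) = (\<Sum>i<k. (- (\<Sum>l<m. B l i * bf eps (w l) (w j))) *\<^sub>R u i)" if j: "j < m" for j
    proof -
      have z2: "(\<Sum>l<m. (\<epsilon> l * bf eps (A (w j)) (w l)) *\<^sub>R w l) = 0"
        by (rule sum_zero_lt) (simp add: bf_sym[of eps "A (w j)"] wU AwU j)
      have z3: "(\<Sum>i<k. bf eps (A (w j)) (u i) *\<^sub>R us i) = 0"
        by (rule sum_zero_lt) (simp add: AU)
      have c: "bf eps (A (w j)) (us i) = - (\<Sum>l<m. B l i * bf eps (w l) (w j))" for i
      proof -
        have "(\<Sum>l<m. B l i * bf eps (w l) (w j)) = bf eps (A (us i)) (w j)"
          by (rule sum_delta_lt[OF j]) (auto simp: B_def wwd j mult.commute mult.left_commute eps2)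
        then show ?thesis using sk[of "w j" "us i"] bf_sym[of eps "w j" "A (us i)"] by simp
      qed
      show ?thesis using expand[of "A (w j)"] unfolding E_def z2 z3 c by simp
    qed
    have Cskew: "C i j = - C j i" for i j
      unfolding C_def using sk[of "us j" "us i"] bf_sym[of eps "us j" "A (us i)"] by simp
    have BB: "(\<Sum>l<m. \<Sum>l'<m. B l i * bf eps (w l) (w l') * B l' j) = 0" if "i < k" "j < k" for i j
    proof -
      have inner: "(\<Sum>l'<m. B l i * bf eps (w l) (w l') * B l' j) = B l i * \<epsilon> l * B l j" if "l < m" for l
        by (rule sum_delta_lt[OF that]) (auto simp: wwd that)
      have "(\<Sum>l<m. \<Sum>l'<m. B l i * bf eps (w l) (w l') * B l' j) = (\<Sum>l<m. B l i * \<epsilon> l * B l j)"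
        using inner by (intro sum.cong) auto
      also have "\<dots> = (\<Sum>l<m. B l j * bf eps (A (us i)) (w l))"
      proof (intro sum.cong refl)
        fix l assume "l \<in> {..<m}"
        then have "\<epsilon> l * \<epsilon> l = 1" using eps2 by auto
        then show "B l i * \<epsilon> l * B l j = B l j * bf eps (A (us i)) (w l)"
          unfolding B_def by (simp add: algebra_simps)
      qed
      also have "\<dots> = bf eps (A (us i)) (A (us j))"
      proof -
        have "bf eps (A (us i)) (\<Sum>i'<k. C i' j *\<^sub>R u i') = 0"
          unfolding bf_sum2 bf_scale2 by (rule sum_zero_lt) (simp add: AU)
        then show ?thesis unfolding Aus[of j] bf_add2 bf_sum2 bf_scale2 by simp
      qed
      also have "\<dots> = 0" unfolding A_def by (rule cross0[OF assms(1-3) g])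
      finally show ?thesis .
    qed
    show "\<exists>(B :: nat \<Rightarrow> nat \<Rightarrow> real) (C :: nat \<Rightarrow> nat \<Rightarrow> real).
     let k = dim (U0 eps \<Gamma>); m = CARD('n) - 2 * k; It = (\<lambda>l l'. bf eps (w l) (w l')) in
       (\<forall>i<k. Apart \<gamma> (u i) = 0)
     \<and> (\<forall>j<m. Apart \<gamma> (w j) = (\<Sum>i<k. (- (\<Sum>l<m. B l i * It l j)) *\<^sub>R u i))
     \<and> (\<forall>j<k. Apart \<gamma> (us j) = (\<Sum>i<k. C i j *\<^sub>R u i) + (\<Sum>l<m. B l j *\<^sub>R w l))
     \<and> (\<forall>i<k. \<forall>j<k. C i j = - C j i)
     \<and> (\<forall>i<k. \<forall>j<k. (\<Sum>l<m. \<Sum>l'<m. B l i * It l l' * B l' j) = 0)"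
      apply (rule exI[of _ B], rule exI[of _ C])
      unfolding Let_def U_def[symmetric] k_def[symmetric] m_def[symmetric] A_def[symmetric]
      using Au Aw Aus Cskew BB by blast
  qed
qed

end
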